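(* Let $k\geq 1$ be fixed and $p\neq 0$ real. The inequality $$\frac{2}{k+2}\left( \frac{\sin x}{x}\right) ^{kp}+\frac{k}{k+2}\left( \frac{\tan x}{x}\right) ^{p}<1$$ holds for all $x\in (0,\pi/2)$ if and only if $-\dfrac{12}{5(k+2)}\leq p<0$. *)

theory Defs
  imports "HOL-Analysis.Analysis"
begin

end

theory Submission
  imports Defs
begin

fun peval :: "int list \<Rightarrow> real \<Rightarrow> real" where
  "peval [] x = 0"
| "peval (c#cs) x = of_int c + x * peval cs x"

fun padd :: "int list \<Rightarrow> int list \<Rightarrow> int list" where
  "padd [] ys = ys"
| "padd xs [] = xs"
| "padd (x#xs) (y#ys) = (x+y) # padd xs ys"

fun psm :: "int \<Rightarrow> int list \<Rightarrow> int list" where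
  "psm c [] = []"
| "psm c (x#xs) = (c*x) # psm c xs"

fun pmul :: "int list \<Rightarrow> int list \<Rightarrow> int list" where
  "pmul [] ys = []"
| "pmul (x#xs) ys = padd (psm x ys) (0 # pmul xs ys)"

fun ppow :: "int list \<Rightarrow> nat \<Rightarrow> int list" where
  "ppow xs 0 = [1]"
| "ppow xs (Suc n) = pmul xs (ppow xs n)"

lemma peval_padd[simp]: "peval (padd xs ys) x = peval xs x + peval ys x"
  by (induction xs ys rule: padd.induct) (auto simp: algebra_simps)
lemma peval_psm[simp]: "peval (psm c xs) x = of_int c * peval xs x"
  by (induction xs) (auto simp: algebra_simps)
lemma peval_pmul[simp]: "peval (pmul xs ys) x = peval xs x * peval ys x"
  by (induction xs) (auto simp: algebra_simps)
lemma peval_ppow[simp]: "peval (ppow xs n) x = peval xs x ^ n"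
  by (induction n) auto

definition stl :: "int \<Rightarrow> int \<Rightarrow> int \<Rightarrow> int \<Rightarrow> int" where
  "stl c a b l = c + (if l \<ge> 0 then a * l else b * l)"
definition sth :: "int \<Rightarrow> int \<Rightarrow> int \<Rightarrow> int \<Rightarrow> int" where
  "sth c a b l = c + (if l \<ge> 0 then b * l else a * l)"

fun plo :: "int list \<Rightarrow> int \<Rightarrow> int \<Rightarrow> int" where
  "plo [] a b = 0"
| "plo (c#cs) a b = stl c a b (plo cs a b)"
fun phi :: "int list \<Rightarrow> int \<Rightarrow> int \<Rightarrow> int" where
  "phi [] a b = 0"
| "phi (c#cs) a b = sth c a b (phi cs a b)"

lemma plo_phi: "0 \<le> a \<Longrightarrow> of_int a \<le> u \<Longrightarrow> u \<le> of_int b \<Longrightarrow>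
   of_int (plo cs a b) \<le> peval cs u \<and> peval cs u \<le> of_int (phi cs a b)"
proof (induction cs)
  case Nil then show ?case by simp
next
  case (Cons c cs)
  then have IH: "of_int (plo cs a b) \<le> peval cs u" "peval cs u \<le> of_int (phi cs a b)" by auto
  have u0: "0 \<le> u" using Cons.prems by linarith
  have l: "of_int (if plo cs a b \<ge> 0 then a * plo cs a b else b * plo cs a b) \<le> u * peval cs u"
  proof (cases "plo cs a b \<ge> 0")
    case True
    have "of_int a * of_int (plo cs a b) \<le> u * of_int (plo cs a b)"
      by (rule mult_right_mono) (use Cons.prems True in auto)
    also have "\<dots> \<le> u * peval cs u" by (rule mult_left_mono) (use IH u0 in auto)
    finally show ?thesis using True by simp
  next
    case False
    have "of_int b * of_int (plo cs a b) \<le> u * of_int (plo cs a b)"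
      by (rule mult_right_mono_neg) (use Cons.prems False in auto)
    also have "\<dots> \<le> u * peval cs u" by (rule mult_left_mono) (use IH u0 in auto)
    finally show ?thesis using False by simp
  qed
  have h: "u * peval cs u \<le> of_int (if phi cs a b \<ge> 0 then b * phi cs a b else a * phi cs a b)"
  proof (cases "phi cs a b \<ge> 0")
    case True
    have "u * peval cs u \<le> u * of_int (phi cs a b)" by (rule mult_left_mono) (use IH u0 in auto)
    also have "\<dots> \<le> of_int b * of_int (phi cs a b)"
      by (rule mult_right_mono) (use Cons.prems True in auto)
    finally show ?thesis using True by simp
  next
    case False
    have "u * peval cs u \<le> u * of_int (phi cs a b)" by (rule mult_left_mono) (use IH u0 in auto)
    also have "\<dots> \<le> of_int a * of_int (phi cs a b)"
      by (rule mult_right_mono_neg) (use Cons.prems False in auto)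
    finally show ?thesis using False by simp
  qed
  show ?case using l h by (simp add: stl_def sth_def)
qed

fun hscale :: "int list \<Rightarrow> int \<Rightarrow> int list" where
  "hscale [] N = []"
| "hscale (c#cs) N = (c * N ^ length cs) # hscale cs N"

lemma peval_hscale: "N > 0 \<Longrightarrow> peval (hscale cs N) u = of_int N ^ (length cs - 1) * peval cs (u / of_int N)"
proof (induction cs)
  case Nil then show ?case by simp
next
  case (Cons c cs)
  show ?case
  proof (cases cs)
    case Nil then show ?thesis by simp
  next
    case (Cons d ds)
    then have "length cs = Suc (length ds)" by simp
    then show ?thesis using Cons.IH Cons.prems
      by (simp add: algebra_simps power_Suc)
  qed
qed

fun chk :: "int list \<Rightarrow> int list \<Rightarrow> bool" where
  "chk cs (a#b#rest) = (0 < plo cs a b \<and> chk cs (b#rest))"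
| "chk cs _ = True"

lemma chk_pos: "chk cs (a#rest) \<Longrightarrow> rest \<noteq> [] \<Longrightarrow> sorted (a#rest) \<Longrightarrow> 0 \<le> a \<Longrightarrow> of_int a \<le> u \<Longrightarrow> u \<le> of_int (last (a#rest)) \<Longrightarrow> 0 < peval cs u"
proof (induction rest arbitrary: a)
  case Nil then show ?case by simp
next
  case (Cons b rest)
  show ?case
  proof (cases "u \<le> of_int b")
    case True
    have "of_int (plo cs a b) \<le> peval cs u" using plo_phi[of a u b cs] Cons.prems True by auto
    moreover have "0 < plo cs a b" using Cons.prems by simp
    ultimately show ?thesis by linarith
  next
    case False
    then have "rest \<noteq> []" using Cons.prems by auto
    show ?thesis
      by (rule Cons.IH[of b]) (use Cons.prems False \<open>rest \<noteq> []\<close> in auto)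
  qed
qed


lemma cos_bound: fixes x :: real shows "\<bar>cos x - (\<Sum>m<n. cos_coeff m * x ^ m)\<bar> \<le> inverse (fact n) * \<bar>x\<bar> ^ n"
proof -
  obtain t where "cos x = (\<Sum>m<n. cos_coeff m * x ^ m) + (cos(t + 1/2 * real n * pi) / fact n) * x ^ n"
    using Maclaurin_cos_expansion by blast
  then have "\<bar>cos x - (\<Sum>m<n. cos_coeff m * x ^ m)\<bar> = \<bar>cos(t + 1/2 * real n * pi)\<bar> / fact n * \<bar>x\<bar> ^ n"
    by (simp add: abs_mult power_abs)
  also have "\<dots> \<le> 1 / fact n * \<bar>x\<bar> ^ n"
    by (intro mult_right_mono divide_right_mono) auto
  finally show ?thesis by (simp add: divide_inverse)
qed

lemma s9: fixes x :: real shows "(\<Sum>m<9. sin_coeff m * x ^ m) = x - x^3/6 + x^5/120 - x^7/5040"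
  proof -
    have e: "{..<9::nat} = {0,1,2,3,4,5,6,7,8}" by (simp add: lessThan_nat_numeral lessThan_Suc insert_commute)
    show ?thesis unfolding e by (simp add: sin_coeff_def fact_numeral)
  qed
lemma f9: "inverse (fact 9) = (1/362880::real)"
    by (simp add: fact_numeral)
lemma sin9: fixes x :: real shows "\<bar>sin x - (x - x^3/6 + x^5/120 - x^7/5040)\<bar> \<le> \<bar>x\<bar>^9/362880"
  using Maclaurin_sin_bound[of x 9] unfolding s9 f9 by simp

lemma c10: fixes x :: real shows "(\<Sum>m<10. cos_coeff m * x ^ m) = 1 - x^2/2 + x^4/24 - x^6/720 + x^8/40320"
  proof -
    have e: "{..<10::nat} = {0,1,2,3,4,5,6,7,8,9}" by (simp add: lessThan_nat_numeral lessThan_Suc insert_commute)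
    show ?thesis unfolding e by (simp add: cos_coeff_def fact_numeral)
  qed
lemma f10: "inverse (fact 10) = (1/3628800::real)"
    by (simp add: fact_numeral)
lemma cos10: fixes x :: real shows "\<bar>cos x - (1 - x^2/2 + x^4/24 - x^6/720 + x^8/40320)\<bar> \<le> \<bar>x\<bar>^10/3628800"
  using cos_bound[of x 10] unfolding c10 f10 by simp

lemma sin_lo9: fixes x :: real assumes "0 \<le> x"
  shows "x * peval [362880,-60480,3024,-72,-1] (x^2) / 362880 \<le> sin x"
proof -
  have "x - x^3/6 + x^5/120 - x^7/5040 - x^9/362880 \<le> sin x" using sin9[of x] unfolding abs_of_nonneg[OF assms] abs_le_iff by linarith
  moreover have "x * peval [362880,-60480,3024,-72,-1] (x^2) / 362880 = x - x^3/6 + x^5/120 - x^7/5040 - x^9/362880"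
    by (simp add: field_simps eval_nat_numeral)
  ultimately show ?thesis by simp
qed

lemma sin_hi9: fixes x :: real assumes "0 \<le> x"
  shows "sin x \<le> x - x^3/6 + x^5/120 - x^7/5040 + x^9/362880"
  using sin9[of x] unfolding abs_of_nonneg[OF assms] abs_le_iff by linarith

lemma cos_hi10: fixes x :: real
  shows "cos x \<le> peval [3628800,-1814400,151200,-5040,90,1] (x^2) / 3628800"
proof -
  have "cos x \<le> 1 - x^2/2 + x^4/24 - x^6/720 + x^8/40320 + x^10/3628800" proof -
    have "\<bar>x\<bar>^10 = x^10" by simp
    then show ?thesis using cos10[of x] unfolding abs_le_iff by linarith
  qed
  moreover have "peval [3628800,-1814400,151200,-5040,90,1] (x^2) / 3628800 = 1 - x^2/2 + x^4/24 - x^6/720 + x^8/40320 + x^10/3628800"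
    by (simp add: field_simps eval_nat_numeral)
  ultimately show ?thesis by simp
qed

lemma cos_lo10: fixes x :: real
  shows "1 - x^2/2 + x^4/24 - x^6/720 + x^8/40320 - x^10/3628800 \<le> cos x"
  proof -
    have "\<bar>x\<bar>^10 = x^10" by simp
    then show ?thesis using cos10[of x] unfolding abs_le_iff by linarith
  qed

lemma rho_hi: fixes x :: real assumes "0 \<le> x"
  shows "sin x - x * cos x \<le> x^3 * peval [1209600, -120960, 4320, -80, 1] (x^2) / 3628800"
proof -
  have "sin x - x * cos x \<le> (x - x^3/6 + x^5/120 - x^7/5040 + x^9/362880) - x * (1 - x^2/2 + x^4/24 - x^6/720 + x^8/40320 - x^10/3628800)"
    using sin_hi9[OF assms] mult_left_mono[OF cos_lo10[of x] assms] by linarith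
  also have "\<dots> = x^3 * peval [1209600, -120960, 4320, -80, 1] (x^2) / 3628800"
    by (simp add: field_simps eval_nat_numeral)
  finally show ?thesis .
qed

lemma rho_lo: fixes x :: real assumes "0 \<le> x"
  shows "x^3 * peval [1209600, -120960, 4320, -100, -1] (x^2) / 3628800 \<le> sin x - x * cos x"
proof -
  have "x^3 * peval [1209600, -120960, 4320, -100, -1] (x^2) / 3628800 = x * peval [362880,-60480,3024,-72,-1] (x^2) / 362880 - x * (peval [3628800,-1814400,151200,-5040,90,1] (x^2) / 3628800)"
    by (simp add: field_simps eval_nat_numeral)
  also have "\<dots> \<le> sin x - x * cos x"
    using sin_lo9[OF assms] mult_left_mono[OF cos_hi10[of x] assms] by linarith
  finally show ?thesis .
qed

lemma poly_pos_scaled: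
  assumes "chk (hscale cs N) (a#rest)" "rest \<noteq> []" "sorted (a#rest)" "0 \<le> a" "N > 0"
    "of_int a \<le> of_int N * t" "of_int N * t \<le> of_int (last (a#rest))"
  shows "0 < peval cs t"
proof -
  have "0 < peval (hscale cs N) (of_int N * t)"
    using chk_pos[OF assms(1-4) assms(6,7)] .
  also have "peval (hscale cs N) (of_int N * t) = of_int N ^ (length cs - 1) * peval cs t"
    using peval_hscale[OF assms(5)] assms(5) by simp
  finally show ?thesis using assms(5) by (simp add: zero_less_mult_iff)
qed

definition "QY = [362880,-60480,3024,-72,-1::int]"
definition "QC = [3628800,-1814400,151200,-5040,90,1::int]"
definition "QR = [1209600,-120960,4320,-80,1::int]"
definition "QRL = [1209600, -120960, 4320, -100, -1::int]"
definition "Q2 = [130478858490956046616284364800000000000, -84086375471949452263827701760000000000, 25752045770131163487821365248000000000, -4977516396536338477714935644160000000, 679005281922867398520267079680000000, -69118491591274013001819095040000000, 5398974941547835594855415808000000, -326444947790742489334284288000000, 15108102068904045782551756800000, -511519280850285140901888000000, 10917069224582545145856000000, -38165925587254404710400000, -6805140970728023654400000, 257783552695487692800000, -4070028436244766720000, 314784493608960000, 885725297418240000, -1336875798528000, -290629923782400, 1347171523200, 60288040800, 421171920, 1075330, -243::int]"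

lemma Q2_pos: "0 \<le> t \<Longrightarrow> t \<le> 5/2 \<Longrightarrow> 0 < peval Q2 t"
  by (rule poly_pos_scaled[of Q2 10 0 "[12,18,21,25]"]) (simp_all add: Q2_def stl_def)

lemma QY_pos: "0 \<le> t \<Longrightarrow> t \<le> 5/2 \<Longrightarrow> 0 < peval QY t"
  by (rule poly_pos_scaled[of QY 10 0 "[25]"]) (simp_all add: QY_def stl_def)

lemma QRL_pos: "0 \<le> t \<Longrightarrow> t \<le> 5/2 \<Longrightarrow> 0 < peval QRL t"
  by (rule poly_pos_scaled[of QRL 10 0 "[25]"]) (simp_all add: QRL_def stl_def)

lemma Qid: "padd (psm 1000000 (ppow QY 6)) (psm (-243) (pmul QC (ppow QR 5))) = 0 # 0 # Q2"
  by (simp add: QY_def QC_def QR_def Q2_def numeral_eq_Suc)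

lemma pi_half_lt: "pi / 2 < (1571/1000::real)"
  using pi_approx by simp

lemma t_le: fixes x :: real assumes "0 < x" "x < pi/2" shows "x^2 \<le> 5/2"
proof -
  have "x < 1571/1000" using assms pi_half_lt by linarith
  then have "x^2 < (1571/1000)^2" using assms by (intro power_strict_mono) auto
  moreover have "(1571/1000::real)^2 \<le> 5/2" by (simp add: power2_eq_square)
  ultimately show ?thesis by linarith
qed

lemma rho_pos: fixes x :: real assumes x0: "0 < x" and "x < pi/2" shows "0 < sin x - x * cos x"
proof -
  have x30: "0 < x^3" using x0 by simp
  have "0 < peval QRL (x^2)" using QRL_pos[of "x^2"] t_le[OF assms] by simp
  then have "0 < x^3 * peval QRL (x^2) / 3628800" using x30 by simp
  also have "\<dots> \<le> sin x - x * cos x" using rho_lo[of x] x0 by (simp add: QRL_def)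
  finally show ?thesis .
qed

lemma key_ineq:
  fixes x :: real
  assumes x0: "0 < x" and x1: "x < pi / 2"
  shows "cos x * (3 * ((sin x - x * cos x) / x^3))^5 < (sin x / x)^6"
proof -
  define t where "t = x^2"
  have t0: "0 < t" using x0 by (simp add: t_def)
  have "x < 1571/1000" using x1 pi_half_lt by linarith
  then have "x^2 < (1571/1000)^2" using x0 by (intro power_strict_mono) auto
  moreover have "(1571/1000::real)^2 \<le> 5/2" by (simp add: power2_eq_square)
  ultimately have t1: "t \<le> 5/2" unfolding t_def by linarith
  define YL where "YL = peval QY t / 362880"
  define CH where "CH = peval QC t / 3628800"
  define RH where "RH = peval QR t / 3628800"
  define \<rho> where "\<rho> = (sin x - x * cos x) / x^3"
  have YL0: "0 < YL" using QY_pos[OF less_imp_le[OF t0] t1] by (simp add: YL_def)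
  have yYL: "YL \<le> sin x / x"
    using sin_lo9[of x] x0 by (simp add: YL_def t_def QY_def field_simps)
  have cosCH: "cos x \<le> CH" using cos_hi10[of x] by (simp add: CH_def t_def QC_def)
  have cos0: "0 < cos x" using x0 x1 by (intro cos_gt_zero) auto
  have x30: "0 < x^3" using x0 by simp
  have rhoRH: "\<rho> \<le> RH"
  proof -
    have "sin x - x * cos x \<le> x^3 * RH"
      using rho_hi[of x] x0 by (simp add: RH_def t_def QR_def)
    then show ?thesis unfolding \<rho>_def using x30 by (simp add: divide_le_eq mult.commute)
  qed
  have rho0: "0 < \<rho>"
  proof -
    have "0 < peval QRL t" using QRL_pos[OF less_imp_le[OF t0] t1] .
    then have "0 < x^3 * peval QRL t / 3628800" using x30 by simp
    also have "\<dots> \<le> sin x - x * cos x" using rho_lo[of x] x0 by (simp add: t_def QRL_def)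
    finally show ?thesis unfolding \<rho>_def using x30 by simp
  qed
  have "cos x * (3 * \<rho>)^5 \<le> CH * (3 * RH)^5"
    by (rule mult_mono) (use cosCH rhoRH rho0 cos0 in \<open>auto intro!: power_mono\<close>)
  also have "CH * (3 * RH)^5 < YL^6"
  proof -
    have "peval (padd (psm 1000000 (ppow QY 6)) (psm (-243) (pmul QC (ppow QR 5)))) t = peval (0 # 0 # Q2) t"
      by (simp only: Qid)
    then have e: "1000000 * peval QY t ^ 6 - 243 * (peval QC t * peval QR t ^ 5) = t * (t * peval Q2 t)"
      by simp
    have "0 < t * (t * peval Q2 t)" using Q2_pos[OF less_imp_le[OF t0] t1] t0 by simp
    then have "243 * (peval QC t * peval QR t ^ 5) < 1000000 * peval QY t ^ 6" using e by linarith
    then show ?thesis by (simp add: CH_def RH_def YL_def power_divide field_simps)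
  qed
  also have "YL^6 \<le> (sin x / x)^6" by (rule power_mono) (use yYL YL0 in auto)
  finally show ?thesis unfolding \<rho>_def .
qed

lemma sinc_lim: "((\<lambda>x::real. sin x / x) \<longlongrightarrow> 1) (at_right 0)"
proof -
  have "DERIV sin 0 :> cos 0" by (rule DERIV_sin)
  then have "(\<lambda>h::real. (sin (0 + h) - sin 0) / h) \<midarrow>0\<rightarrow> 1" unfolding DERIV_def by simp
  then show ?thesis by (simp add: filterlim_at_split)
qed

definition phiA :: "real \<Rightarrow> real" where
  "phiA x = 3 * (sin x / x) powr (4/5) - 2 - cos x powr (4/5)"

lemma sinx_pos: "0 < x \<Longrightarrow> x < pi/2 \<Longrightarrow> 0 < sin (x::real) / x"
  using sin_gt_zero[of x] pi_gt3 by (auto intro!: divide_pos_pos)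

lemma phiA_deriv:
  fixes x :: real
  assumes x0: "0 < x" and x1: "x < pi / 2"
  shows "\<exists>D. DERIV phiA x :> D \<and> 0 < D"
proof -
  have s0: "0 < sin x" using x0 x1 by (intro sin_gt_zero) auto
  have c0: "0 < cos x" using x0 x1 by (intro cos_gt_zero) auto
  define y where "y = sin x / x"
  have y0: "0 < y" using s0 x0 by (simp add: y_def)
  have dy: "DERIV (\<lambda>x. sin x / x) x :> (cos x * x - sin x * 1) / (x * x)"
    by (rule DERIV_divide) (use x0 in \<open>auto intro!: derivative_eq_intros\<close>)
  have d1: "DERIV (\<lambda>x. (sin x / x) powr (4/5)) x :> (4/5) * (sin x / x) powr (4/5 - of_nat 1) * ((cos x * x - sin x * 1) / (x * x))"
    by (rule DERIV_fun_powr[OF dy]) (use y0 in \<open>simp add: y_def\<close>)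
  have d2: "DERIV (\<lambda>x. cos x powr (4/5)) x :> (4/5) * (cos x) powr (4/5 - of_nat 1) * (- sin x)"
    by (rule DERIV_fun_powr) (use c0 in \<open>auto intro!: derivative_eq_intros\<close>)
  define D where "D = 3 * ((4/5) * (sin x / x) powr (4/5 - of_nat 1) * ((cos x * x - sin x * 1) / (x * x))) - 0 - (4/5) * (cos x) powr (4/5 - of_nat 1) * (- sin x)"
  have "DERIV phiA x :> D"
    unfolding phiA_def[abs_def] D_def
    by (intro DERIV_diff DERIV_cmult d1 d2 DERIV_const)
  moreover have "0 < D"
  proof -
    define \<rho> where "\<rho> = (sin x - x * cos x) / x^3"
    have key: "cos x * (3 * \<rho>)^5 < y^6" using key_ineq[OF x0 x1] by (simp add: \<rho>_def y_def)
    have rho0: "0 < \<rho>" using rho_pos[OF x0 x1] x0 by (simp add: \<rho>_def)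
    have "(cos x * (3 * \<rho>)^5) powr (1/5) < (y^6) powr (1/5)"
      by (rule powr_less_mono2) (use key c0 rho0 in auto)
    moreover have "(cos x * (3 * \<rho>)^5) powr (1/5) = cos x powr (1/5) * (3 * \<rho>)"
    proof -
      have "((3 * \<rho>)^5) powr (1/5) = ((3 * \<rho>) powr (real 5)) powr (1/5)"
        using rho0 by (simp only: powr_realpow)
      also have "\<dots> = 3 * \<rho>" by (simp only: powr_powr) (use rho0 in simp)
      finally have e1: "((3 * \<rho>)^5) powr (1/5) = 3 * \<rho>" .
      show ?thesis by (subst powr_mult) (use c0 rho0 e1 in auto)
    qed
    moreover have "(y^6) powr (1/5) = y powr (6/5)"
    proof -
      have "(y^6) powr (1/5) = (y powr (real 6)) powr (1/5)"
        using y0 by (simp only: powr_realpow)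
      also have "\<dots> = y powr (6/5)" by (simp only: powr_powr) simp
      finally show ?thesis .
    qed
    ultimately have A: "cos x powr (1/5) * (3 * \<rho>) < y powr (6/5)" by simp
    define a where "a = y powr (1/5)"
    define b where "b = cos x powr (1/5)"
    have a0: "0 < a" using y0 by (simp add: a_def)
    have b0: "0 < b" using c0 by (simp add: b_def)
    have ya: "y powr (6/5) = y * a"
    proof -
      have "y powr (6/5) = y powr (1 + 1/5)" by simp
      also have "\<dots> = y * a" by (simp only: powr_add) (use y0 in \<open>simp add: a_def\<close>)
      finally show ?thesis .
    qed
    have e45: "(4/5 - of_nat 1::real) = - (1/5)" by simp
    have ia: "(sin x / x) powr (4/5 - of_nat 1) = 1 / a"
      unfolding e45 powr_minus_divide a_def y_def ..
    have ib: "cos x powr (4/5 - of_nat 1) = 1 / b"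
      unfolding e45 powr_minus_divide b_def ..
    have sx: "sin x = x * y" using x0 by (simp add: y_def)
    have r3: "sin x - x * cos x = x^3 * \<rho>" using x0 by (simp add: \<rho>_def)
    have "D = (4/5) * x * (y / b - 3 * \<rho> / a)"
    proof -
      have "(cos x * x - sin x * 1) / (x * x) = - (x * \<rho>)"
        using r3 x0 by (simp add: field_simps power3_eq_cube)
      then show ?thesis unfolding D_def ia ib unfolding sx
        by (simp add: field_simps)
    qed
    moreover have "3 * \<rho> / a < y / b"
      using A a0 b0 unfolding ya b_def[symmetric] by (simp add: field_simps mult.commute)
    ultimately show ?thesis using x0
      by (metis diff_gt_0_iff_gt mult_pos_pos zero_less_divide_iff zero_less_numeral)
  qed
  ultimately show ?thesis by blast
qed

lemma phiA_lim: "(phiA \<longlongrightarrow> 0) (at_right 0)"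
proof -
  have c: "((\<lambda>x::real. cos x) \<longlongrightarrow> 1) (at_right 0)"
    using tendsto_cos[OF tendsto_ident_at[of 0 "{0<..}"]] by simp
  have "((\<lambda>x. 3 * (sin x / x) powr (4/5) - 2 - cos x powr (4/5)) \<longlongrightarrow> 3 * 1 powr (4/5) - 2 - 1 powr (4/5)) (at_right (0::real))"
    by (intro tendsto_intros tendsto_powr sinc_lim c) auto
  then show ?thesis unfolding phiA_def[abs_def] by simp
qed

lemma phiA_mono: fixes a b :: real assumes "0 < a" "a < b" "b < pi/2" shows "phiA a < phiA b"
  by (rule DERIV_pos_imp_increasing[OF assms(2)]) (use phiA_deriv assms in auto)

lemma phiA_pos: fixes x :: real assumes x0: "0 < x" and x1: "x < pi/2" shows "0 < phiA x"
proof -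
  have "0 \<le> phiA (x/2)"
  proof (rule tendsto_upperbound[OF phiA_lim])
    show "\<forall>\<^sub>F i in at_right 0. phiA i \<le> phiA (x / 2)"
      unfolding eventually_at_right_field
    proof (rule exI[of _ "x/2"], intro conjI allI impI)
      fix y :: real assume "0 < y" "y < x/2"
      then show "phiA y \<le> phiA (x/2)" using x0 x1 by (intro less_imp_le phiA_mono) auto
    qed (use x0 in auto)
  qed simp
  also have "phiA (x/2) < phiA x" using x0 x1 by (intro phiA_mono) auto
  finally show ?thesis .
qed

lemma A_ineq: fixes x :: real assumes "0 < x" "x < pi/2"
  shows "(2 + cos x powr (4/5)) / 3 < (sin x / x) powr (4/5)"
  using phiA_pos[OF assms] unfolding phiA_def by simp

lemma H_ineq:
  fixes B sg :: real
  assumes B1: "1 \<le> B" and B2: "B < 3/2" and s0: "0 < sg" and s1: "sg \<le> 1"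
  shows "(2* sg/3) * B powr (3 - 2* sg) + (1 - 2* sg/3) * (3 - 2* B) powr sg \<le> 1"
proof -
  define g where "g u = (2* sg/3) * u powr (3 - 2* sg) + (1 - 2* sg/3) * (3 - 2* u) powr sg" for u :: real
  have "g B \<le> g 1"
  proof (rule DERIV_nonpos_imp_nonincreasing[OF B1])
    fix u :: real assume u1: "1 \<le> u" and u2: "u \<le> B"
    have u0: "0 < u" using u1 by simp
    have v0: "0 < 3 - 2* u" using u2 B2 by simp
    have d1: "DERIV (\<lambda>u. u powr (3 - 2* sg)) u :> (3 - 2* sg) * u powr (3 - 2* sg - of_nat 1) * 1"
      by (rule DERIV_fun_powr) (use u0 in \<open>auto intro!: derivative_eq_intros\<close>)
    have d2: "DERIV (\<lambda>u. (3 - 2* u) powr sg) u :> sg * (3 - 2* u) powr (sg - of_nat 1) * (0 - 2 * 1)"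
      by (rule DERIV_fun_powr) (use v0 in \<open>auto intro!: derivative_eq_intros\<close>)
    define D where "D = (2* sg/3) * ((3 - 2* sg) * u powr (3 - 2* sg - of_nat 1) * 1) + (1 - 2* sg/3) * (sg * (3 - 2* u) powr (sg - of_nat 1) * (0 - 2 * 1))"
    have "DERIV g u :> D" unfolding g_def[abs_def] D_def
      by (intro DERIV_add DERIV_cmult d1 d2)
    moreover have "D \<le> 0"
    proof -
      have "u powr (2 - 2* sg) \<le> (3 - 2* u) powr (sg - 1)"
      proof -
        have "u powr (2 - 2* sg) = (u powr 2) powr (1 - sg)"
          by (simp add: powr_powr algebra_simps)
        also have "\<dots> = (u^2) powr (1 - sg)" using u0 by simp
        also have "\<dots> \<le> (1 / (3 - 2* u)) powr (1 - sg)"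
        proof (rule powr_mono2)
          have "u^2 * (3 - 2* u) \<le> 1"
          proof -
            have "1 - u^2 * (3 - 2* u) = (u - 1)^2 * (2* u + 1)" by (simp add: algebra_simps power2_eq_square)
            moreover have "0 \<le> (u - 1)^2 * (2* u + 1)" using u0 by simp
            ultimately show ?thesis by linarith
          qed
          then show "u^2 \<le> 1 / (3 - 2* u)" using v0 by (simp add: field_simps)
        qed (use s1 in auto)
        also have "\<dots> = (3 - 2* u) powr (sg - 1)"
          using v0 by (simp add: powr_divide powr_minus_divide[symmetric])
        finally show ?thesis .
      qed
      moreover have "D = (2* sg/3) * (3 - 2* sg) * (u powr (2 - 2* sg) - (3 - 2* u) powr (sg - 1))"
        unfolding D_def by (simp add: algebra_simps; simp add: field_simps)
      moreover have "0 \<le> (2* sg/3) * (3 - 2* sg)" using s0 s1 by simp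
      ultimately show ?thesis by (metis mult_nonneg_nonpos diff_le_0_iff_le)
    qed
    ultimately show "\<exists>y. DERIV g u :> y \<and> y \<le> 0" by blast
  qed
  moreover have "g 1 = 1" by (simp add: g_def)
  ultimately show ?thesis by (simp add: g_def)
qed

lemma young1: fixes X r :: real assumes "0 < X" "0 \<le> r" "r \<le> 1"
  shows "X powr r \<le> r * X + (1 - r)"
  using Youngs_inequality_0[of r "1 - r" X 1] assms by simp

lemma suff:
  fixes k p x :: real
  assumes k1: "k \<ge> 1" and p1: "- 12 / (5 * (k + 2)) \<le> p" and p0: "p < 0"
    and x0: "0 < x" and x1: "x < pi / 2"
  shows "2 / (k + 2) * (sin x / x) powr (k * p) + k / (k + 2) * (tan x / x) powr p < 1"
proof -
  define y where "y = sin x / x"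
  define z where "z = cos x"
  have y0: "0 < y" unfolding y_def using sinx_pos[OF x0 x1] .
  have z0: "0 < z" unfolding z_def using x0 x1 by (intro cos_gt_zero) auto
  have z1: "z \<le> 1" unfolding z_def by simp
  define m where "m = z powr (4/5)"
  have m0: "0 < m" using z0 by (simp add: m_def)
  have m1: "m \<le> 1"
  proof -
    have "z powr (4/5) \<le> 1 powr (4/5)" by (rule powr_mono2) (use z0 z1 in auto)
    then show ?thesis by (simp add: m_def)
  qed
  define A where "A = (2 + m) / 3"
  have A0: "2/3 < A" "A \<le> 1" using m0 m1 by (auto simp: A_def)
  define B where "B = 1 / A"
  have B1: "1 \<le> B" "B < 3/2" using A0 by (auto simp: B_def field_simps)
  define Y where "Y = y powr (4/5)"
  have AY: "A < Y" using A_ineq[OF x0 x1] by (simp add: A_def Y_def m_def y_def z_def)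
  define q0 where "q0 = 12 / (5 * (k + 2))"
  define sg where "sg = 3 / (k + 2)"
  have kk: "0 < k + 2" using k1 by simp
  have sg0: "0 < sg" "sg \<le> 1" using k1 by (auto simp: sg_def field_simps)
  have q00: "0 < q0" using kk by (simp add: q0_def)
  define w where "w = 2 / (k + 2)"
  have w_sg: "w = 2 * sg / 3" using kk by (simp add: w_def sg_def field_simps)
  have w1: "k / (k + 2) = 1 - 2 * sg / 3" using kk by (simp add: sg_def field_simps)
  define X1 where "X1 = y powr (- (k * q0))"
  define X2 where "X2 = (y / z) powr (- q0)"
  have X1pos: "0 < X1" using y0 by (simp add: X1_def)
  have X2pos: "0 < X2" using y0 z0 by (simp add: X2_def)
  have X1lt: "X1 < B powr (3 - 2 * sg)"
  proof -
    have "X1 = Y powr (- (3 - 2 * sg))"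
    proof -
      have "(4/5) * (- (3 - 2 * sg)) = - (k * q0)" using kk by (simp add: sg_def q0_def field_simps)
      then show ?thesis by (simp add: X1_def Y_def powr_powr)
    qed
    also have "\<dots> < A powr (- (3 - 2 * sg))"
      by (rule powr_less_mono2_neg) (use sg0 A0 AY in auto)
    also have "\<dots> = B powr (3 - 2 * sg)"
      by (subst powr_minus_divide) (simp add: B_def powr_divide)
    finally show ?thesis .
  qed
  have X2lt: "X2 < (3 - 2 * B) powr sg"
  proof -
    have "X2 = Y powr (- sg) * m powr sg"
    proof -
      have e1: "(4/5) * sg = q0" by (simp add: sg_def q0_def)
      have "X2 = y powr (- q0) / z powr (- q0)" by (simp add: X2_def powr_divide)
      also have "\<dots> = Y powr (- sg) * m powr sg"
        by (simp add: Y_def m_def powr_powr e1[symmetric] powr_minus_divide)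
      finally show ?thesis .
    qed
    also have "\<dots> < A powr (- sg) * m powr sg"
      by (rule mult_strict_right_mono, rule powr_less_mono2_neg) (use sg0 A0 AY m0 in auto)
    also have "\<dots> = (m * B) powr sg"
      by (subst powr_minus_divide) (simp add: B_def powr_divide powr_mult)
    also have "m * B = 3 - 2 * B" using A0 by (simp add: B_def A_def field_simps)
    finally show ?thesis .
  qed
  define F0 where "F0 = w * X1 + (k / (k + 2)) * X2"
  have F0lt: "F0 < 1"
  proof -
    have "F0 < (2 * sg / 3) * B powr (3 - 2 * sg) + (1 - 2 * sg / 3) * (3 - 2 * B) powr sg"
      unfolding F0_def w_sg w1
      by (intro add_strict_mono mult_strict_left_mono X1lt X2lt) (use sg0 in auto)
    also have "\<dots> \<le> 1" by (rule H_ineq) (use B1 sg0 in auto)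
    finally show ?thesis .
  qed
  define r where "r = - p / q0"
  have mpq: "- p \<le> q0" using p1 by (simp add: q0_def)
  have r0a: "0 < r" unfolding r_def using p0 q00 by (intro divide_pos_pos) auto
  have r0b: "r \<le> 1" unfolding r_def using q00 mpq by (simp add: le_divide_eq)
  note r0 = r0a r0b
  have e1: "(sin x / x) powr (k * p) = X1 powr r"
  proof -
    have "- (k * q0) * r = k * p" using q00 by (simp add: r_def)
    then show ?thesis by (simp add: X1_def powr_powr y_def)
  qed
  have e2: "(tan x / x) powr p = X2 powr r"
  proof -
    have "- q0 * r = p" using q00 by (simp add: r_def)
    moreover have "tan x / x = y / z" by (simp add: y_def z_def tan_def)
    ultimately show ?thesis by (simp add: X2_def powr_powr)
  qed
  have "2 / (k + 2) * (sin x / x) powr (k * p) + k / (k + 2) * (tan x / x) powr p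
      \<le> w * (r * X1 + (1 - r)) + (k / (k + 2)) * (r * X2 + (1 - r))"
    unfolding e1 e2 w_def[symmetric]
    by (intro add_mono mult_left_mono young1) (use X1pos X2pos r0 kk k1 in \<open>auto simp: w_def\<close>)
  also have "\<dots> = r * F0 + (1 - r) * (w + k / (k + 2))" by (simp add: F0_def algebra_simps add_divide_distrib diff_divide_distrib)
  also have "w + k / (k + 2) = 1" using kk by (simp add: w_def add_divide_distrib[symmetric] add.commute)
  also have "r * F0 + (1 - r) * 1 < 1" using F0lt r0 by (simp add: algebra_simps)
  finally show ?thesis .
qed

lemma nec_pos:
  fixes k p :: real
  assumes k1: "k \<ge> 1" and p0: "p > 0"
  shows "\<exists>x. 0 < x \<and> x < pi / 2 \<and> \<not> (2 / (k + 2) * (sin x / x) powr (k * p) + k / (k + 2) * (tan x / x) powr p < 1)"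
proof -
  define M where "M = ((k + 2) / k) powr (1 / p)"
  have M0: "0 < M" using k1 by (simp add: M_def)
  define T where "T = 2 * M"
  define x where "x = arctan T"
  have x0: "0 < x" using M0 by (simp add: x_def T_def)
  have x1: "x < pi / 2" unfolding x_def by (rule arctan_ubound)
  have tx: "tan x = T" by (simp add: x_def tan_arctan)
  have "x < 2" using x1 pi_less_4 by linarith
  then have "M \<le> tan x / x" using x0 M0 by (simp add: tx T_def field_simps)
  then have "M powr p \<le> (tan x / x) powr p" using p0 M0 by (intro powr_mono2) auto
  moreover have "M powr p = (k + 2) / k" using k1 p0 by (simp add: M_def powr_powr)
  ultimately have "(k + 2) / k \<le> (tan x / x) powr p" by simp
  then have "1 \<le> k / (k + 2) * (tan x / x) powr p" using k1 by (simp add: field_simps)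
  moreover have "0 \<le> 2 / (k + 2) * (sin x / x) powr (k * p)" using k1 by simp
  ultimately show ?thesis using x0 x1 by (intro exI[of _ x]) auto
qed

lemma exp_cubic_lower: fixes u :: real shows "1 + u + u^2/2 + u^3/6 \<le> exp u"
proof -
  obtain s where s: "exp u = (\<Sum>m<4. u ^ m / fact m) + exp s / fact 4 * u ^ 4"
    using Maclaurin_exp_le[of u 4] by blast
  have e: "{..<4::nat} = {0,1,2,3}" by (simp add: lessThan_nat_numeral lessThan_Suc insert_commute)
  have "(\<Sum>m<4. u ^ m / fact m) = 1 + u + u^2/2 + u^3/6"
    unfolding e by (simp add: fact_numeral)
  moreover have "0 \<le> exp s / fact 4 * u ^ 4" by simp
  ultimately show ?thesis using s by linarith
qed

lemma small_bounds:
  fixes x t :: real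
  assumes x0: "0 < x" and t: "t = x^2" and t1: "t \<le> 1"
  shows "sin x / x \<le> 1 - t/6 + t^2/120" "1 - t/6 \<le> sin x / x"
    "cos x \<le> 1 - t/2 + t^2/24" "1 - t/2 + t^2/24 - t^3/720 \<le> cos x"
proof -
  have t0: "0 \<le> t" using t by simp
  have p43: "t^4 \<le> t^3" using t0 t1 by (intro power_decreasing) auto
  have p32: "t^3 \<le> t^2" using t0 t1 by (intro power_decreasing) auto
  have p54: "t^5 \<le> t^4" using t0 t1 by (intro power_decreasing) auto
  have p4: "0 \<le> t^4" using t0 by simp
  have p3: "0 \<le> t^3" using t0 by simp
  have e1: "x - x^3/6 + x^5/120 - x^7/5040 + x^9/362880 = x * (1 - t/6 + t^2/120 - t^3/5040 + t^4/362880)"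
    by (simp add: t field_simps eval_nat_numeral)
  have e2: "x - x^3/6 + x^5/120 - x^7/5040 - x^9/362880 = x * (1 - t/6 + t^2/120 - t^3/5040 - t^4/362880)"
    by (simp add: t field_simps eval_nat_numeral)
  have e3: "1 - x^2/2 + x^4/24 - x^6/720 + x^8/40320 + x^10/3628800 = 1 - t/2 + t^2/24 - t^3/720 + t^4/40320 + t^5/3628800"
    by (simp add: t field_simps eval_nat_numeral)
  have e4: "1 - x^2/2 + x^4/24 - x^6/720 + x^8/40320 - x^10/3628800 = 1 - t/2 + t^2/24 - t^3/720 + t^4/40320 - t^5/3628800"
    by (simp add: t field_simps eval_nat_numeral)
  have "sin x \<le> x * (1 - t/6 + t^2/120 - t^3/5040 + t^4/362880)" using sin_hi9[of x] x0 e1 by simp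
  then have "sin x / x \<le> 1 - t/6 + t^2/120 - t^3/5040 + t^4/362880" using x0 by (simp add: divide_le_eq mult.commute)
  then show "sin x / x \<le> 1 - t/6 + t^2/120" using p43 p3 by linarith
  have "x * (1 - t/6 + t^2/120 - t^3/5040 - t^4/362880) \<le> sin x"
    using sin_lo9[of x] x0 e2 by (simp add: QY_def t field_simps eval_nat_numeral)
  then have "1 - t/6 + t^2/120 - t^3/5040 - t^4/362880 \<le> sin x / x" using x0 by (simp add: le_divide_eq mult.commute)
  then show "1 - t/6 \<le> sin x / x" using p43 p32 p3 by linarith
  have "cos x \<le> 1 - t/2 + t^2/24 - t^3/720 + t^4/40320 + t^5/3628800"
    using cos_hi10[of x] e3 by (simp add: t field_simps eval_nat_numeral)
  then show "cos x \<le> 1 - t/2 + t^2/24" using p54 p43 p4 p3 by linarith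
  have "1 - t/2 + t^2/24 - t^3/720 + t^4/40320 - t^5/3628800 \<le> cos x"
    using cos_lo10[of x] e4 by simp
  then show "1 - t/2 + t^2/24 - t^3/720 \<le> cos x" using p54 p4 by linarith
qed

lemma P3_ineq: fixes t :: real assumes t0: "0 \<le> t" and t1: "t \<le> 1/10"
  shows "(1 - t/6 + t^2/120)^3 \<le> (1 - t/2 + t^2/24 - t^3/720) * (1 + t^2/15 + t^3)"
proof -
  have "0 < peval [1690400, -860760, 71900, -2401] t"
    by (rule poly_pos_scaled[of _ 10 0 "[1]"]) (use t0 t1 in \<open>simp_all add: stl_def\<close>)
  then have "0 \<le> t^3 * peval [1690400, -860760, 71900, -2401] t" using t0 by simp
  moreover have "t^3 * peval [1690400, -860760, 71900, -2401] t = 1728000 * ((1 - t/2 + t^2/24 - t^3/720) * (1 + t^2/15 + t^3) - (1 - t/6 + t^2/120)^3)"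
    by (simp add: field_simps eval_nat_numeral)
  ultimately show ?thesis by simp
qed

lemma nec_neg:
  fixes k p :: real
  assumes k1: "k \<ge> 1" and p1: "p < - 12 / (5 * (k + 2))"
  shows "\<exists>x. 0 < x \<and> x < pi / 2 \<and> \<not> (2 / (k + 2) * (sin x / x) powr (k * p) + k / (k + 2) * (tan x / x) powr p < 1)"
proof -
  define q where "q = - p"
  have kk: "0 < k + 2" using k1 by simp
  have qq: "12 / (5 * (k + 2)) < q" using p1 by (simp add: q_def)
  have q0: "0 < q" using qq kk by (smt (verit) divide_pos_pos)
  define \<delta> where "\<delta> = (k + 2) * q / 36 - 1/15"
  have d0: "0 < \<delta>"
  proof -
    have "12 < q * (5 * (k + 2))" using qq kk by (simp add: divide_less_eq)
    then show ?thesis by (simp add: \<delta>_def algebra_simps)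
  qed
  define c where "c = 1 + q^2/6"
  have c0: "0 < c" by (simp add: c_def add_pos_nonneg)
  define t where "t = min (1/10) (\<delta> / c)"
  have t0: "0 < t" using d0 c0 by (simp add: t_def)
  have t1: "t \<le> 1/10" unfolding t_def by (rule min.cobounded1)
  have tc: "t * c \<le> \<delta>"
  proof -
    have "t \<le> \<delta> / c" unfolding t_def by (rule min.cobounded2)
    then show ?thesis using c0 by (simp add: le_divide_eq)
  qed
  define x where "x = sqrt t"
  have x0: "0 < x" using t0 by (simp add: x_def)
  have xt: "t = x^2" using t0 by (simp add: x_def)
  have "x \<le> 1" using t1 by (simp add: x_def real_sqrt_le_1_iff)
  then have x1: "x < pi / 2" using pi_gt3 by linarith
  define y where "y = sin x / x"
  define z where "z = cos x"
  have y0: "0 < y" unfolding y_def using sinx_pos[OF x0 x1] .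
  have z0: "0 < z" unfolding z_def using x0 x1 by (intro cos_gt_zero) auto
  note sb = small_bounds[OF x0 xt, unfolded y_def[symmetric] z_def[symmetric]]
  have yh: "y \<le> 1 - t/6 + t^2/120" using sb(1) t1 by simp
  have yl: "1 - t/6 \<le> y" using sb(2) t1 by simp
  have zh: "z \<le> 1 - t/2 + t^2/24" using sb(3) t1 by simp
  have zl: "1 - t/2 + t^2/24 - t^3/720 \<le> z" using sb(4) t1 by simp
  have t2: "t^2 \<le> t" using t0 t1 by (simp add: power2_eq_square mult_le_cancel_left1)
  have t3: "t^3 \<le> t^2" using t0 t1 by (intro power_decreasing) auto
  have t3n: "0 \<le> t^3" using t0 by simp
  define a where "a = - ln y"
  define b where "b = ln y - ln z"
  have a1: "t/6 \<le> a"
  proof -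
    have "y \<le> exp (- (t/6))"
    proof -
      have "1 + (- (t/6)) + (- (t/6))^2/2 + (- (t/6))^3/6 \<le> exp (- (t/6))" by (rule exp_cubic_lower)
      moreover have "1 - t/6 + t^2/120 \<le> 1 + (- (t/6))^2/2 + (- (t/6))^3/6 - t/6"
      proof -
        have "t^3/1296 \<le> t^2/180" using t3 t1 t0 by (simp add: power3_eq_cube power2_eq_square)
        then show ?thesis by (simp add: power3_eq_cube power2_eq_square field_simps)
      qed
      ultimately show ?thesis using yh by linarith
    qed
    then have "ln y \<le> - (t/6)" using y0 ln_le_cancel_iff[of y "exp (- (t/6))"] by simp
    then show ?thesis by (simp add: a_def)
  qed
  have b1: "t/3 \<le> b"
  proof -
    have "z \<le> y * (1 - t/3)"
    proof -
      have "(1 - t/6) * (1 - t/3) \<le> y * (1 - t/3)" by (rule mult_right_mono) (use yl t1 in auto)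
      moreover have "1 - t/2 + t^2/24 \<le> (1 - t/6) * (1 - t/3)"
        using t0 by (simp add: algebra_simps power2_eq_square)
      ultimately show ?thesis using zh by linarith
    qed
    then have "t/3 \<le> 1 - z / y" using y0 by (simp add: field_simps)
    also have "1 - z / y \<le> ln (y / z)"
      using ln_le_minus_one[of "z / y"] y0 z0 by (simp add: ln_div)
    also have "ln (y / z) = b" using y0 z0 by (simp add: b_def ln_div)
    finally show ?thesis .
  qed
  have b2: "b \<le> t"
  proof -
    have y1: "y \<le> 1" using yh t1 t0 t2 by linarith
    have "1 \<le> z * (1 + t)"
    proof -
      have "1 - t/2 \<le> z" using zl t3 t3n by linarith
      then have "(1 - t/2) * (1 + t) \<le> z * (1 + t)" using t0 by (intro mult_right_mono) auto
      moreover have "1 \<le> (1 - t/2) * (1 + t)" using t0 t1 t2 by (simp add: algebra_simps power2_eq_square)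
      ultimately show ?thesis by linarith
    qed
    then have "1 / z - 1 \<le> t" using z0 by (simp add: field_simps)
    moreover have "y / z \<le> 1 / z" using y1 z0 by (simp add: divide_right_mono)
    moreover have "ln (y / z) \<le> y / z - 1" using y0 z0 by (intro ln_le_minus_one) simp
    moreover have "ln (y / z) = b" using y0 z0 by (simp add: b_def ln_div)
    ultimately show ?thesis by linarith
  qed
  have b0: "0 \<le> b" using b1 t0 by linarith
  have ab: "- (t^2/15) - t^3 \<le> 2 * a - b"
  proof -
    have yh0: "0 \<le> 1 - t/6 + t^2/120" using t0 t1 by (simp add: add_nonneg_nonneg)
    have "y^3 \<le> (1 - t/6 + t^2/120)^3" by (rule power_mono) (use yh y0 in auto)
    also have "\<dots> \<le> (1 - t/2 + t^2/24 - t^3/720) * (1 + t^2/15 + t^3)" by (rule P3_ineq) (use t0 t1 in auto)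
    also have "\<dots> \<le> z * (1 + t^2/15 + t^3)" by (rule mult_right_mono) (use zl t0 in auto)
    finally have "y^3 / z - 1 \<le> t^2/15 + t^3" using z0 by (simp add: field_simps)
    moreover have "ln (y^3 / z) \<le> y^3 / z - 1" using y0 z0 by (intro ln_le_minus_one) simp
    moreover have "ln (y^3 / z) = - (2 * a - b)" using y0 z0 by (simp add: a_def b_def ln_div ln_realpow)
    ultimately show ?thesis by linarith
  qed
  define w where "w = 2 / (k + 2)"
  have e1: "(sin x / x) powr (k * p) = exp (k * q * a)"
    using y0 by (simp add: y_def[symmetric] powr_def a_def q_def)
  have e2: "(tan x / x) powr p = exp (- (q * b))"
  proof -
    have "tan x / x = y / z" by (simp add: y_def z_def tan_def)
    then show ?thesis using y0 z0 by (simp add: powr_def q_def b_def ln_div algebra_simps)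
  qed
  have ka: "0 \<le> k * q * a" using k1 q0 a1 t0 by simp
  have E1: "1 + k * q * a + (k * q * a)^2 / 2 \<le> exp (k * q * a)"
    by (rule exp_lower_Taylor_quadratic[OF ka])
  have E2: "1 - q * b + (q * b)^2 / 2 - (q * b)^3 / 6 \<le> exp (- (q * b))"
    using exp_cubic_lower[of "- (q * b)"] by (simp add: power2_eq_square power3_eq_cube)
  define Brk where "Brk = 2 * a - b + k * q * a^2 + q * b^2 / 2 - q^2 * b^3 / 6"
  have Bpos: "0 \<le> Brk"
  proof -
    have "t^2 / 36 \<le> a^2"
    proof -
      have "(t/6)^2 \<le> a^2" by (rule power_mono) (use a1 t0 in auto)
      then show ?thesis by (simp add: power_divide)
    qed
    then have i1: "k * q * (t^2/36) \<le> k * q * a^2" using k1 q0 by (intro mult_left_mono) auto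
    have "t^2 / 9 \<le> b^2"
    proof -
      have "(t/3)^2 \<le> b^2" by (rule power_mono) (use b1 t0 in auto)
      then show ?thesis by (simp add: power_divide)
    qed
    then have i2: "q * (t^2/9) / 2 \<le> q * b^2 / 2" using q0 by (intro divide_right_mono mult_left_mono) auto
    have "b^3 \<le> t^3" by (rule power_mono) (use b2 b0 in auto)
    then have i3: "q^2 * b^3 / 6 \<le> q^2 * t^3 / 6" by (intro divide_right_mono mult_left_mono) auto
    have "t^2 * (t * c) \<le> t^2 * \<delta>" using tc by (intro mult_left_mono) auto
    then have i4: "0 \<le> t^2 * \<delta> - t^3 * c" by (simp add: power3_eq_cube power2_eq_square algebra_simps)
    have "t^2 * \<delta> - t^3 * c = - (t^2/15) - t^3 + k * q * (t^2/36) + q * (t^2/9) / 2 - q^2 * t^3 / 6"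
      by (simp add: \<delta>_def c_def algebra_simps)
    then show ?thesis unfolding Brk_def using ab i1 i2 i3 i4 by linarith
  qed
  have "1 \<le> w * (1 + k * q * a + (k * q * a)^2 / 2) + (k / (k + 2)) * (1 - q * b + (q * b)^2 / 2 - (q * b)^3 / 6)"
  proof -
    have num: "2 * (1 + k * q * a + (k * q * a)^2 / 2) + k * (1 - q * b + (q * b)^2 / 2 - (q * b)^3 / 6)
          = (k + 2) + k * q * Brk"
      unfolding Brk_def by (simp add: field_simps power2_eq_square power3_eq_cube)
    have "w * (1 + k * q * a + (k * q * a)^2 / 2) + (k / (k + 2)) * (1 - q * b + (q * b)^2 / 2 - (q * b)^3 / 6)
          = (2 * (1 + k * q * a + (k * q * a)^2 / 2) + k * (1 - q * b + (q * b)^2 / 2 - (q * b)^3 / 6)) / (k + 2)"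
      by (simp add: w_def add_divide_distrib)
    also have "\<dots> = ((k + 2) + k * q * Brk) / (k + 2)" by (simp only: num)
    also have "\<dots> = 1 + (k * q / (k + 2)) * Brk" using kk by (simp add: add_divide_distrib)
    finally have "w * (1 + k * q * a + (k * q * a)^2 / 2) + (k / (k + 2)) * (1 - q * b + (q * b)^2 / 2 - (q * b)^3 / 6)
          = 1 + (k * q / (k + 2)) * Brk" .
    moreover have "0 \<le> (k * q / (k + 2)) * Brk" using Bpos k1 q0 kk by simp
    ultimately show ?thesis by linarith
  qed
  also have "\<dots> \<le> w * exp (k * q * a) + (k / (k + 2)) * exp (- (q * b))"
  proof (rule add_mono)
    show "w * (1 + k * q * a + (k * q * a)^2 / 2) \<le> w * exp (k * q * a)"
      by (rule mult_left_mono[OF E1]) (use kk in \<open>simp add: w_def\<close>)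
    show "(k / (k + 2)) * (1 - q * b + (q * b)^2 / 2 - (q * b)^3 / 6) \<le> (k / (k + 2)) * exp (- (q * b))"
      by (rule mult_left_mono[OF E2]) (use kk k1 in simp)
  qed
  finally have "1 \<le> 2 / (k + 2) * (sin x / x) powr (k * p) + k / (k + 2) * (tan x / x) powr p"
    unfolding e1 e2 w_def .
  then show ?thesis using x0 x1 by (intro exI[of _ x]) auto
qed

theorem theorem3p2:
  fixes k p :: real
  assumes "k \<ge> 1" and "p \<noteq> 0"
  shows "(\<forall>x::real. 0 < x \<and> x < pi / 2 \<longrightarrow>
            2 / (k + 2) * (sin x / x) powr (k * p) + k / (k + 2) * (tan x / x) powr p < 1)
         \<longleftrightarrow> (- 12 / (5 * (k + 2)) \<le> p \<and> p < 0)"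
proof
  assume H: "\<forall>x::real. 0 < x \<and> x < pi / 2 \<longrightarrow>
            2 / (k + 2) * (sin x / x) powr (k * p) + k / (k + 2) * (tan x / x) powr p < 1"
  show "- 12 / (5 * (k + 2)) \<le> p \<and> p < 0"
  proof (rule ccontr)
    assume "\<not> (- 12 / (5 * (k + 2)) \<le> p \<and> p < 0)"
    then consider "p > 0" | "p < - 12 / (5 * (k + 2))" using assms(2) by linarith
    then show False
    proof cases
      case 1
      then show False using nec_pos[OF assms(1) 1] H by blast
    next
      case 2
      then show False using nec_neg[OF assms(1) 2] H by blast
    qed
  qed
next
  assume "- 12 / (5 * (k + 2)) \<le> p \<and> p < 0"
  then show "\<forall>x::real. 0 < x \<and> x < pi / 2 \<longrightarrow>
            2 / (k + 2) * (sin x / x) powr (k * p) + k / (k + 2) * (tan x / x) powr p < 1"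
    using suff[OF assms(1)] by blast
qed

end
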